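(* For every integer $k>0$ there exists a monotonic transition function $\varphi$ with $\varphi(0)=0$ and $\varphi'(0)>0$ such that the function $$I(x)=4\int_x^{L(x)}\varphi(s)\big(\varphi'(s)\big)^2\,ds,\qquad x\in(0,1),$$ where $L(x)\in(-1,0)$ is defined by $\varphi(L(x))=-\varphi(x)$, has at least $k$ simple zeros in $(0,1)$.
   Context: A transition function is a $C^\infty$ function $\varphi:\mathbb{R}\to\mathbb{R}$ with $\varphi(t)=-1$ for $t\le-1$, $\varphi(t)=1$ for $t\ge1$; monotonic means $\varphi'(t)>0$ on $(-1,1)$. *)

theory Defs
  imports "HOL-Analysis.Analysis"
begin

definition smooth_fun :: "(real \<Rightarrow> real) \<Rightarrow> bool" where
  "smooth_fun f \<longleftrightarrow> (\<forall>n x. ((deriv ^^ n) f) differentiable (at x))"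

definition transition_fun :: "(real \<Rightarrow> real) \<Rightarrow> bool" where
  "transition_fun \<phi> \<longleftrightarrow> smooth_fun \<phi> \<and>
     (\<forall>t. t \<le> -1 \<longrightarrow> \<phi> t = -1) \<and> (\<forall>t. t \<ge> 1 \<longrightarrow> \<phi> t = 1)"

definition monotonic_transition :: "(real \<Rightarrow> real) \<Rightarrow> bool" where
  "monotonic_transition \<phi> \<longleftrightarrow> transition_fun \<phi> \<and>
     (\<forall>t\<in>{-1<..<1}. deriv \<phi> t > 0)"

definition L_fun :: "(real \<Rightarrow> real) \<Rightarrow> real \<Rightarrow> real" where
  "L_fun \<phi> x = (THE y. y \<in> {-1<..<0} \<and> \<phi> y = - \<phi> x)"

text \<open>I(x) = 4 * int_x^{L x} phi(s) phi'(s)^2 ds (oriented integral; L x < x).\<close>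
definition I_fun :: "(real \<Rightarrow> real) \<Rightarrow> real \<Rightarrow> real" where
  "I_fun \<phi> x = 4 * (if x \<le> L_fun \<phi> x
      then integral {x..L_fun \<phi> x} (\<lambda>s. \<phi> s * (deriv \<phi> s)^2)
      else - integral {L_fun \<phi> x..x} (\<lambda>s. \<phi> s * (deriv \<phi> s)^2))"

definition simple_zero :: "(real \<Rightarrow> real) \<Rightarrow> real \<Rightarrow> bool" where
  "simple_zero f x \<longleftrightarrow> f x = 0 \<and> (\<exists>d. (f has_real_derivative d) (at x) \<and> d \<noteq> 0)"

end

theory Submission
  imports Defs "HOL-Computational_Algebra.Polynomial"
begin

definition su :: "nat \<Rightarrow> (real\<Rightarrow>real) \<Rightarrow> bool" where
  "su n f \<longleftrightarrow> (\<forall>m\<le>n. \<forall>x. (deriv^^m) f differentiable (at x))"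

lemma smooth_su: "smooth_fun f \<longleftrightarrow> (\<forall>n. su n f)"
  unfolding smooth_fun_def su_def by auto

lemma su_0: "su 0 f \<longleftrightarrow> (\<forall>x. f differentiable (at x))"
  unfolding su_def by auto

lemma funpow_deriv_Suc: "(deriv^^(Suc m)) f = (deriv^^m) (deriv f)"
  by (rule funpow_Suc_right[THEN fun_cong, unfolded o_def])

lemma su_Suc: "su (Suc n) f \<longleftrightarrow> (\<forall>x. f differentiable (at x)) \<and> su n (deriv f)"
proof
  assume h: "su (Suc n) f"
  show "(\<forall>x. f differentiable (at x)) \<and> su n (deriv f)"
  proof
    show "\<forall>x. f differentiable (at x)"
    proof
      fix x
      have "(deriv^^0) f differentiable (at x)" using h unfolding su_def by blast
      then show "f differentiable (at x)" by simp
    qed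
    show "su n (deriv f)" unfolding su_def
    proof (intro allI impI)
      fix m x assume "m \<le> n"
      then have "Suc m \<le> Suc n" by simp
      then have "(deriv ^^ Suc m) f differentiable at x"
        using h unfolding su_def by blast
      then show "(deriv ^^ m) (deriv f) differentiable at x"
        by (simp only: funpow_deriv_Suc)
    qed
  qed
next
  assume h: "(\<forall>x. f differentiable (at x)) \<and> su n (deriv f)"
  show "su (Suc n) f" unfolding su_def
  proof (intro allI impI)
    fix m x assume m: "m \<le> Suc n"
    show "(deriv ^^ m) f differentiable at x"
    proof (cases m)
      case 0 then show ?thesis using h by simp
    next
      case (Suc m')
      then have "m' \<le> n" using m by simp
      then have "(deriv ^^ m') (deriv f) differentiable at x" using h unfolding su_def by blast
      then show ?thesis using Suc by (simp only: funpow_deriv_Suc)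
    qed
  qed
qed

lemma su_mono: "su n f \<Longrightarrow> m \<le> n \<Longrightarrow> su m f"
  unfolding su_def by auto

lemma su_diff: "su n f \<Longrightarrow> f differentiable (at x)"
proof -
  assume "su n f"
  then have "(deriv^^0) f differentiable (at x)" unfolding su_def by blast
  then show ?thesis by simp
qed

lemma deriv_eqI: "(\<And>x. (f has_real_derivative g x) (at x)) \<Longrightarrow> deriv f = g"
  by (rule ext) (rule DERIV_imp_deriv)

lemma hasd: "f differentiable (at x) \<Longrightarrow> (f has_real_derivative deriv f x) (at x)"
  using DERIV_deriv_iff_real_differentiable by blast

lemma su_const: "su n (\<lambda>x. c)"
proof (induction n arbitrary: c)
  case 0 then show ?case by (simp add: su_0)
next
  case (Suc n) then show ?case by (simp add: su_Suc)
qed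

lemma su_id: "su n (\<lambda>x. x)"
proof (cases n)
  case 0 then show ?thesis by (simp add: su_0)
next
  case (Suc m)
  have "deriv (\<lambda>x::real. x) = (\<lambda>x. 1)" by (rule deriv_eqI) auto
  then show ?thesis using Suc by (simp add: su_Suc su_const)
qed

lemma su_add: "su n f \<Longrightarrow> su n g \<Longrightarrow> su n (\<lambda>x. f x + g x)"
proof (induction n arbitrary: f g)
  case 0 then show ?case by (auto simp: su_0)
next
  case (Suc n)
  have df: "\<And>x. f differentiable (at x)" and dg: "\<And>x. g differentiable (at x)"
    using conjunct1[OF su_Suc[THEN iffD1, OF Suc.prems(1)]] conjunct1[OF su_Suc[THEN iffD1, OF Suc.prems(2)]] by simp_all
  have e: "deriv (\<lambda>x. f x + g x) = (\<lambda>x. deriv f x + deriv g x)"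
    by (rule deriv_eqI) (intro DERIV_add hasd df dg)
  show ?case unfolding su_Suc e using Suc df dg by (auto simp: su_Suc)
qed

lemma su_mult: "su n f \<Longrightarrow> su n g \<Longrightarrow> su n (\<lambda>x. f x * g x)"
proof (induction n arbitrary: f g)
  case 0 then show ?case by (auto simp: su_0)
next
  case (Suc n)
  have df: "\<And>x. f differentiable (at x)" and dg: "\<And>x. g differentiable (at x)"
    using conjunct1[OF su_Suc[THEN iffD1, OF Suc.prems(1)]] conjunct1[OF su_Suc[THEN iffD1, OF Suc.prems(2)]] by simp_all
  have e: "deriv (\<lambda>x. f x * g x) = (\<lambda>x. deriv f x * g x + f x * deriv g x)"
    by (rule deriv_eqI, rule DERIV_cong[OF DERIV_mult[OF hasd[OF df] hasd[OF dg]]]) (simp add: algebra_simps)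
  have sf: "su n f" "su n g" using su_mono[OF Suc.prems(1), of n] su_mono[OF Suc.prems(2), of n] by simp_all
  have sd: "su n (deriv f)" "su n (deriv g)"
    using conjunct2[OF su_Suc[THEN iffD1, OF Suc.prems(1)]] conjunct2[OF su_Suc[THEN iffD1, OF Suc.prems(2)]] by simp_all
  have "su n (\<lambda>x. deriv f x * g x + f x * deriv g x)"
    using sf sd by (intro su_add Suc.IH)
  then show ?case unfolding su_Suc e using df dg by auto
qed

lemma diff_comp: "g differentiable (at x) \<Longrightarrow> f differentiable (at (g x)) \<Longrightarrow> (\<lambda>x. f (g x)) differentiable (at x)"
proof -
  assume a: "g differentiable (at x)" "f differentiable (at (g x))"
  have "(f \<circ> g) differentiable (at x)" by (rule differentiable_chain_at[OF a])
  then show ?thesis by (simp only: comp_def)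
qed

lemma su_compose: "su n f \<Longrightarrow> su n g \<Longrightarrow> su n (\<lambda>x. f (g x))"
proof (induction n arbitrary: f g)
  case 0
  then have a: "\<And>x. f differentiable (at x)" "\<And>x. g differentiable (at x)" by (simp_all add: su_0)
  show ?case unfolding su_0
  proof
    fix x show "(\<lambda>x. f (g x)) differentiable (at x)" by (rule diff_comp[of g x f], rule a(2), rule a(1))
  qed
next
  case (Suc n)
  have df: "\<And>x. f differentiable (at x)" and dg: "\<And>x. g differentiable (at x)"
    using conjunct1[OF su_Suc[THEN iffD1, OF Suc.prems(1)]] conjunct1[OF su_Suc[THEN iffD1, OF Suc.prems(2)]] by simp_all
  have e: "deriv (\<lambda>x. f (g x)) = (\<lambda>x. deriv f (g x) * deriv g x)"
    by (rule deriv_eqI) (rule DERIV_chain2[OF hasd[OF df] hasd[OF dg]])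
  have sf: "su n f" "su n g" using su_mono[OF Suc.prems(1), of n] su_mono[OF Suc.prems(2), of n] by simp_all
  have sd: "su n (deriv f)" "su n (deriv g)"
    using conjunct2[OF su_Suc[THEN iffD1, OF Suc.prems(1)]] conjunct2[OF su_Suc[THEN iffD1, OF Suc.prems(2)]] by simp_all
  have "su n (\<lambda>x. deriv f (g x) * deriv g x)"
    by (rule su_mult[OF Suc.IH[OF sd(1) sf(2)] sd(2)])
  moreover have "\<And>x. (\<lambda>x. f (g x)) differentiable (at x)"
    by (rule diff_comp[of g _ f], rule dg, rule df)
  ultimately show ?case unfolding su_Suc e by auto
qed

lemma su_inverse: "su n f \<Longrightarrow> (\<And>x. f x \<noteq> 0) \<Longrightarrow> su n (\<lambda>x. 1 / f x)"
proof (induction n arbitrary: f)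
  case 0
  show ?case unfolding su_0
  proof
    fix x
    have fd: "f differentiable (at x)" using su_diff[OF 0(1)] .
    have "((\<lambda>x. inverse (f x)) has_real_derivative - (deriv f x * inverse (f x ^ Suc (Suc 0)))) (at x)"
      using DERIV_inverse_fun[OF hasd[OF fd] 0(2)[of x]] by simp
    then show "(\<lambda>x. 1 / f x) differentiable (at x)"
      unfolding real_differentiable_def by (auto simp: inverse_eq_divide)
  qed
next
  case (Suc n)
  have df: "\<And>x. f differentiable (at x)" using conjunct1[OF su_Suc[THEN iffD1, OF Suc.prems(1)]] by simp
  have d1: "\<And>x. ((\<lambda>x. 1 / f x) has_real_derivative - deriv f x * (1 / f x) * (1 / f x)) (at x)"
  proof -
    fix x
    have "((\<lambda>x. inverse (f x)) has_real_derivative - (deriv f x * inverse (f x ^ 2))) (at x)"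
      using DERIV_inverse_fun[OF hasd[OF df[of x]] Suc.prems(2)[of x]] by (simp add: numeral_2_eq_2)
    moreover have "- (deriv f x * inverse (f x ^ 2)) = - deriv f x * (1 / f x) * (1 / f x)"
      by (simp add: power2_eq_square divide_inverse inverse_mult_distrib)
    moreover have "(\<lambda>x. inverse (f x)) = (\<lambda>x. 1 / f x)" by (simp add: inverse_eq_divide)
    ultimately show "((\<lambda>x. 1 / f x) has_real_derivative - deriv f x * (1 / f x) * (1 / f x)) (at x)"
      by simp
  qed
  have e: "deriv (\<lambda>x. 1 / f x) = (\<lambda>x. - deriv f x * (1 / f x) * (1 / f x))"
    by (rule deriv_eqI) (rule d1)
  have sn: "su n (\<lambda>x. 1 / f x)" using Suc.IH[OF su_mono[OF Suc.prems(1), of n]] Suc.prems(2) by simp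
  have "su n (\<lambda>x. - deriv f x * (1 / f x) * (1 / f x))"
  proof -
    have "su n (deriv f)" using conjunct2[OF su_Suc[THEN iffD1, OF Suc.prems(1)]] .
    then have "su n (\<lambda>x. - 1 * deriv f x)" by (intro su_mult su_const)
    then have "su n (\<lambda>x. (- 1 * deriv f x) * (1 / f x))" using sn by (rule su_mult)
    then have "su n (\<lambda>x. ((- 1 * deriv f x) * (1 / f x)) * (1 / f x))" using sn by (rule su_mult)
    then show ?thesis by simp
  qed
  moreover have "\<And>x. (\<lambda>x. 1 / f x) differentiable (at x)" unfolding real_differentiable_def using d1 by blast
  ultimately show ?case unfolding su_Suc e by auto
qed

lemma smooth_add: "smooth_fun f \<Longrightarrow> smooth_fun g \<Longrightarrow> smooth_fun (\<lambda>x. f x + g x)"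
  unfolding smooth_su by (metis su_add)
lemma smooth_mult: "smooth_fun f \<Longrightarrow> smooth_fun g \<Longrightarrow> smooth_fun (\<lambda>x. f x * g x)"
  unfolding smooth_su by (metis su_mult)
lemma smooth_compose: "smooth_fun f \<Longrightarrow> smooth_fun g \<Longrightarrow> smooth_fun (\<lambda>x. f (g x))"
  unfolding smooth_su by (metis su_compose)
lemma smooth_inverse: "smooth_fun f \<Longrightarrow> (\<And>x. f x \<noteq> 0) \<Longrightarrow> smooth_fun (\<lambda>x. 1 / f x)"
  unfolding smooth_su by (metis su_inverse)
lemma smooth_const: "smooth_fun (\<lambda>x. c)"
  unfolding smooth_su by (metis su_const)
lemma smooth_id: "smooth_fun (\<lambda>x. x)"
  unfolding smooth_su by (metis su_id)
lemma smooth_diff: "smooth_fun f \<Longrightarrow> smooth_fun g \<Longrightarrow> smooth_fun (\<lambda>x. f x - g x)"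
proof -
  assume "smooth_fun f" "smooth_fun g"
  then have "smooth_fun (\<lambda>x. f x + (-1) * g x)" by (intro smooth_add smooth_mult smooth_const)
  then show ?thesis by simp
qed
lemma smooth_divide: "smooth_fun f \<Longrightarrow> smooth_fun g \<Longrightarrow> (\<And>x. g x \<noteq> 0) \<Longrightarrow> smooth_fun (\<lambda>x. f x / g x)"
proof -
  assume "smooth_fun f" "smooth_fun g" "\<And>x. g x \<noteq> 0"
  then have "smooth_fun (\<lambda>x. f x * (1 / g x))" by (intro smooth_mult smooth_inverse)
  then show ?thesis by simp
qed

lemma smooth_deriv: "smooth_fun f \<Longrightarrow> smooth_fun (deriv f)"
  unfolding smooth_su proof
  fix n assume "\<forall>n. su n f"
  then have "su (Suc n) f" by blast
  then show "su n (deriv f)" using conjunct2[OF su_Suc[THEN iffD1]] by blast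
qed
lemma smooth_differentiable: "smooth_fun f \<Longrightarrow> f differentiable (at x)"
  by (auto simp: smooth_su intro: su_diff)
lemma smooth_isCont: "smooth_fun f \<Longrightarrow> isCont f x"
  by (simp add: differentiable_imp_continuous_within smooth_differentiable)
lemma smooth_hasd: "smooth_fun f \<Longrightarrow> (f has_real_derivative deriv f x) (at x)"
  by (simp add: hasd smooth_differentiable)

lemma smooth_tower:
  assumes "D 0 = f" "\<And>n x. (D n has_real_derivative D (Suc n) x) (at x)"
  shows "smooth_fun f"
proof -
  have *: "(deriv^^n) f = D n" for n
  proof (induction n)
    case 0 then show ?case using assms by simp
  next
    case (Suc n) then show ?case using assms(2) by (simp add: deriv_eqI)
  qed
  show ?thesis unfolding smooth_fun_def
  proof (intro allI)
    fix n x
    have "(D n has_real_derivative D (Suc n) x) (at x)" by (rule assms(2))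
    then have "D n differentiable (at x)" unfolding real_differentiable_def by blast
    then show "(deriv ^^ n) f differentiable at x" using *[of n] by simp
  qed
qed




fun PP :: "nat \<Rightarrow> real poly" where
  "PP 0 = 1"
| "PP (Suc n) = [:0,0,1:] * (PP n - pderiv (PP n))"

definition Ed :: "nat \<Rightarrow> real \<Rightarrow> real" where
  "Ed n x = (if x > 0 then poly (PP n) (1/x) * exp (- (1/x)) else 0)"

lemma poly_exp_lim: "((\<lambda>t. poly (q::real poly) t * exp (- t)) \<longlongrightarrow> 0) at_top"
proof -
  have e: "(\<lambda>t. poly q t * exp (- t)) = (\<lambda>t. \<Sum>i\<le>degree q. coeff q i * (t ^ i / exp t))"
    by (rule ext) (simp add: poly_altdef sum_distrib_right exp_minus divide_inverse mult.assoc)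
  have "((\<lambda>t. \<Sum>i\<le>degree q. coeff q i * (t ^ i / exp t)) \<longlongrightarrow> (\<Sum>i\<le>degree q. coeff q i * 0)) at_top"
    by (intro tendsto_sum tendsto_mult tendsto_const tendsto_power_div_exp_0)
  then show ?thesis unfolding e by simp
qed

lemma poly_exp_lim0: "((\<lambda>y. poly (q::real poly) (1/y) * exp (- (1/y))) \<longlongrightarrow> 0) (at_right 0)"
proof -
  have "filterlim (\<lambda>y. inverse y) at_top (at_right (0::real))" by (rule filterlim_inverse_at_top_right)
  from filterlim_compose[OF poly_exp_lim[of q] this]
  show ?thesis by (simp add: inverse_eq_divide)
qed

lemma Ed_deriv_pos:
  assumes "x > 0"
  shows "(Ed n has_real_derivative Ed (Suc n) x) (at x)"
proof -
  let ?g = "\<lambda>x. poly (PP n) (1/x) * exp (- (1/x))"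
  have d: "(?g has_real_derivative
     (poly (pderiv (PP n)) (1/x) * (- (1/x^2))) * exp (- (1/x)) + poly (PP n) (1/x) * (exp (- (1/x)) * (1/x^2))) (at x)"
  proof -
    have d1: "((\<lambda>x. 1/x) has_real_derivative - (1/x^2)) (at x)"
      using assms by (auto intro!: derivative_eq_intros simp: power2_eq_square field_simps)
    have d2: "((\<lambda>x. poly (PP n) (1/x)) has_real_derivative poly (pderiv (PP n)) (1/x) * (- (1/x^2))) (at x)"
      by (rule DERIV_chain2[OF poly_DERIV d1])
    have d3: "((\<lambda>x. exp (- (1/x))) has_real_derivative exp (- (1/x)) * (1/x^2)) (at x)"
      using DERIV_chain2[OF DERIV_exp DERIV_minus[OF d1]] by simp
    show ?thesis using DERIV_mult[OF d2 d3] by (simp add: algebra_simps)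
  qed
  have val: "(poly (pderiv (PP n)) (1/x) * (- (1/x^2))) * exp (- (1/x)) + poly (PP n) (1/x) * (exp (- (1/x)) * (1/x^2))
      = Ed (Suc n) x"
    using assms by (simp add: Ed_def algebra_simps power2_eq_square)
  show ?thesis
    by (rule has_field_derivative_transform_within_open[OF d[unfolded val], of "{0<..}"])
       (use assms in \<open>auto simp: Ed_def\<close>)
qed

lemma Ed_deriv_neg:
  assumes "x < 0"
  shows "(Ed n has_real_derivative Ed (Suc n) x) (at x)"
proof -
  have "((\<lambda>x. 0) has_real_derivative 0) (at x)" by simp
  then have "(Ed n has_real_derivative 0) (at x)"
    by (rule has_field_derivative_transform_within_open[of _ _ _ "{..<0}"]) (use assms in \<open>auto simp: Ed_def\<close>)
  then show ?thesis using assms by (simp add: Ed_def)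
qed

lemma Ed_deriv_0: "(Ed n has_real_derivative Ed (Suc n) 0) (at 0)"
proof -
  have r: "((\<lambda>y. (Ed n y - Ed n 0) / (y - 0)) \<longlongrightarrow> 0) (at_right 0)"
  proof -
    have "((\<lambda>y. poly ([:0,1:] * PP n) (1/y) * exp (- (1/y))) \<longlongrightarrow> 0) (at_right 0)"
      by (rule poly_exp_lim0)
    moreover have "eventually (\<lambda>y. poly ([:0,1:] * PP n) (1/y) * exp (- (1/y)) = (Ed n y - Ed n 0) / (y - 0)) (at_right 0)"
      unfolding eventually_at_filter by (simp add: Ed_def)
    ultimately show ?thesis by (rule Lim_transform_eventually)
  qed
  have l: "((\<lambda>y. (Ed n y - Ed n 0) / (y - 0)) \<longlongrightarrow> 0) (at_left 0)"
  proof (rule tendsto_eventually)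
    show "eventually (\<lambda>y. (Ed n y - Ed n 0) / (y - 0) = 0) (at_left 0)"
      by (simp add: eventually_at_filter Ed_def)
  qed
  have "((\<lambda>y. (Ed n y - Ed n 0) / (y - 0)) \<longlongrightarrow> 0) (at 0)"
    by (rule filterlim_split_at[OF l r])
  then show ?thesis unfolding has_field_derivative_iff by (simp add: Ed_def)
qed

lemma Ed_deriv: "(Ed n has_real_derivative Ed (Suc n) x) (at x)"
  using Ed_deriv_pos Ed_deriv_neg Ed_deriv_0 by (cases "x > 0"; cases "x < 0") auto

lemma smooth_E: "smooth_fun (Ed 0)"
  by (rule smooth_tower[of Ed], simp, rule Ed_deriv)

lemma Ed0: "Ed 0 x = (if x > 0 then exp (- (1/x)) else 0)"
  by (simp add: Ed_def)

lemma Ed1: "Ed (Suc 0) x = (if x > 0 then (1/x)^2 * exp (- (1/x)) else 0)"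
  by (simp add: Ed_def power2_eq_square)

lemma E_pos: "x > 0 \<Longrightarrow> Ed 0 x > 0" by (simp add: Ed0)
lemma E_zero: "x \<le> 0 \<Longrightarrow> Ed 0 x = 0" by (simp add: Ed0)
lemma E1_pos: "x > 0 \<Longrightarrow> Ed (Suc 0) x > 0" by (simp add: Ed1)
lemma E1_zero: "x \<le> 0 \<Longrightarrow> Ed (Suc 0) x = 0" by (simp add: Ed1)
lemma E_nonneg: "Ed 0 x \<ge> 0" by (simp add: Ed0)
lemma E1_nonneg: "Ed (Suc 0) x \<ge> 0" by (simp add: Ed1)
lemma E_hasd: "(Ed 0 has_real_derivative Ed (Suc 0) x) (at x)"
  using Ed_deriv[of 0 x] by simp


abbreviation "EE \<equiv> Ed 0"
abbreviation "EE' \<equiv> Ed (Suc 0)"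

definition psi :: "real \<Rightarrow> real" where
  "psi t = (EE (1+t) - EE (1-t)) / (EE (1+t) + EE (1-t))"

definition dpsi :: "real \<Rightarrow> real" where
  "dpsi t = 2 * (EE' (1+t) * EE (1-t) + EE (1+t) * EE' (1-t)) / (EE (1+t) + EE (1-t))^2"

lemma den_pos: "EE (1+t) + EE (1-t) > 0"
proof (cases "t \<ge> 0")
  case True then show ?thesis using E_pos[of "1+t"] E_nonneg[of "1-t"] by simp
next
  case False then show ?thesis using E_pos[of "1-t"] E_nonneg[of "1+t"] by simp
qed

lemma psi_hasd: "(psi has_real_derivative dpsi t) (at t)"
proof -
  have d1: "((\<lambda>t. EE (1+t)) has_real_derivative EE' (1+t)) (at t)"
  proof -
    have "((\<lambda>t. 1+t) has_real_derivative 1) (at t)" by (auto intro!: derivative_eq_intros)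
    from DERIV_chain2[OF E_hasd[of "1+t"] this] show ?thesis by simp
  qed
  have d2: "((\<lambda>t. EE (1-t)) has_real_derivative - EE' (1-t)) (at t)"
  proof -
    have "((\<lambda>t. 1-t) has_real_derivative -1) (at t)" by (auto intro!: derivative_eq_intros)
    from DERIV_chain2[OF E_hasd[of "1-t"] this] show ?thesis by simp
  qed
  have "(psi has_real_derivative
     ((EE' (1+t) - - EE' (1-t)) * (EE (1+t) + EE (1-t)) - (EE (1+t) - EE (1-t)) * (EE' (1+t) + - EE' (1-t)))
       / ((EE (1+t) + EE (1-t)) * (EE (1+t) + EE (1-t)))) (at t)"
    unfolding psi_def[abs_def]
    by (rule DERIV_divide[OF DERIV_diff[OF d1 d2] DERIV_add[OF d1 d2]]) (use den_pos[of t] in simp)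
  moreover have "((EE' (1+t) - - EE' (1-t)) * (EE (1+t) + EE (1-t)) - (EE (1+t) - EE (1-t)) * (EE' (1+t) + - EE' (1-t)))
       / ((EE (1+t) + EE (1-t)) * (EE (1+t) + EE (1-t))) = dpsi t"
    unfolding dpsi_def by (simp add: power2_eq_square algebra_simps)
  ultimately show ?thesis by simp
qed

lemma deriv_psi: "deriv psi = dpsi"
  by (rule deriv_eqI) (rule psi_hasd)

lemma smooth_psi: "smooth_fun psi"
proof -
  have a: "smooth_fun (\<lambda>t. EE (1+t))" by (rule smooth_compose[OF smooth_E smooth_add[OF smooth_const smooth_id]])
  have b: "smooth_fun (\<lambda>t. EE (1-t))" by (rule smooth_compose[OF smooth_E smooth_diff[OF smooth_const smooth_id]])
  show ?thesis unfolding psi_def[abs_def]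
    by (rule smooth_divide[OF smooth_diff[OF a b] smooth_add[OF a b]]) (use den_pos in \<open>auto simp: less_le\<close>)
qed

lemma psi_odd: "psi (-t) = - psi t"
  unfolding psi_def by (simp add: minus_divide_left add.commute)

lemma dpsi_even: "dpsi (-t) = dpsi t"
  unfolding dpsi_def by (simp add: add.commute mult.commute)

lemma psi_lo: "t \<le> -1 \<Longrightarrow> psi t = -1"
  unfolding psi_def using E_zero[of "1+t"] E_pos[of "1-t"] by simp

lemma psi_hi: "t \<ge> 1 \<Longrightarrow> psi t = 1"
  unfolding psi_def using E_zero[of "1-t"] E_pos[of "1+t"] by simp

lemma psi_0: "psi 0 = 0"
  unfolding psi_def by simp

lemma dpsi_pos: "-1 < t \<Longrightarrow> t < 1 \<Longrightarrow> dpsi t > 0"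
  unfolding dpsi_def using E_pos[of "1+t"] E_pos[of "1-t"] E1_pos[of "1+t"] E1_pos[of "1-t"] den_pos[of t]
  by (simp add: add_pos_pos)

lemma dpsi_nonneg: "dpsi t \<ge> 0"
  unfolding dpsi_def using E_nonneg[of "1+t"] E_nonneg[of "1-t"] E1_nonneg[of "1+t"] E1_nonneg[of "1-t"]
  by simp

lemma dpsi_out: "t \<le> -1 \<or> t \<ge> 1 \<Longrightarrow> dpsi t = 0"
  unfolding dpsi_def using E_zero[of "1-t"] E_zero[of "1+t"] E1_zero[of "1-t"] E1_zero[of "1+t"]
  by auto

lemma isCont_dpsi: "isCont dpsi t"
  using smooth_isCont[OF smooth_deriv[OF smooth_psi]] by (simp add: deriv_psi)

lemma isCont_psi: "isCont psi t"
  using smooth_isCont[OF smooth_psi] .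

lemma psi_mono: "s \<le> t \<Longrightarrow> psi s \<le> psi t"
  by (rule DERIV_nonneg_imp_nondecreasing[of s t psi]) (use psi_hasd dpsi_nonneg in blast)+

lemma psi_strict:
  assumes "-1 \<le> s" "s < t" "t \<le> 1"
  shows "psi s < psi t"
proof (rule DERIV_pos_imp_increasing_open[of s t psi])
  show "s < t" by fact
  fix x assume "s < x" "x < t"
  then show "\<exists>y. DERIV psi x :> y \<and> 0 < y" using assms psi_hasd dpsi_pos by (meson le_less_trans less_le_trans)
next
  show "continuous_on {s..t} psi" using isCont_psi continuous_at_imp_continuous_on by blast
qed

lemma psi_pos: "0 < t \<Longrightarrow> t \<le> 1 \<Longrightarrow> psi t > 0"
  using psi_strict[of 0 t] psi_0 by simp

lemma psi_le1: "psi t \<le> 1"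
  using psi_mono[of t "max t 1"] psi_hi[of "max t 1"] by simp

lemma psi_inj: "-1 \<le> s \<Longrightarrow> s \<le> 1 \<Longrightarrow> -1 \<le> t \<Longrightarrow> t \<le> 1 \<Longrightarrow> psi s = psi t \<Longrightarrow> s = t"
  using psi_strict[of s t] psi_strict[of t s] by (cases s t rule: linorder_cases) auto


lemma smooth_sum: "finite A \<Longrightarrow> (\<And>j. j \<in> A \<Longrightarrow> smooth_fun (f j)) \<Longrightarrow> smooth_fun (\<lambda>t. \<Sum>j\<in>A. f j t)"
proof (induction A rule: finite_induct)
  case empty then show ?case by (simp add: smooth_const)
next
  case (insert x F)
  have "smooth_fun (\<lambda>t. f x t + (\<Sum>j\<in>F. f j t))"
    using insert by (intro smooth_add) auto
  then show ?case using insert by simp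
qed

definition argf :: "nat \<Rightarrow> nat \<Rightarrow> real \<Rightarrow> real" where
  "argf N j t = 4 * real N * (t - 1/4) - (2 * real j - 1)"
definition Tf :: "nat \<Rightarrow> nat \<Rightarrow> real \<Rightarrow> real" where
  "Tf N j t = (1 + psi (argf N j t)) / 2"
definition dTf :: "nat \<Rightarrow> nat \<Rightarrow> real \<Rightarrow> real" where
  "dTf N j t = 2 * real N * dpsi (argf N j t)"
definition betaf :: "nat \<Rightarrow> (nat \<Rightarrow> real) \<Rightarrow> real \<Rightarrow> real" where
  "betaf N w t = (\<Sum>j=1..N. w j * Tf N j t)"
definition dbetaf :: "nat \<Rightarrow> (nat \<Rightarrow> real) \<Rightarrow> real \<Rightarrow> real" where
  "dbetaf N w t = (\<Sum>j=1..N. w j * dTf N j t)"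
definition yf :: "nat \<Rightarrow> nat \<Rightarrow> real" where
  "yf N j = 1/4 + real j / (2 * real N)"

lemma T_hasd: "(Tf N j has_real_derivative dTf N j t) (at t)"
proof -
  have a: "(argf N j has_real_derivative 4 * real N) (at t)"
    unfolding argf_def[abs_def] by (auto intro!: derivative_eq_intros)
  have "((\<lambda>t. psi (argf N j t)) has_real_derivative dpsi (argf N j t) * (4 * real N)) (at t)"
    by (rule DERIV_chain2[OF psi_hasd a])
  then have "((\<lambda>t. (1 + psi (argf N j t)) / 2) has_real_derivative (0 + dpsi (argf N j t) * (4 * real N)) / 2) (at t)"
    by (intro DERIV_cdivide DERIV_add DERIV_const)
  then show ?thesis unfolding Tf_def[abs_def] dTf_def by (simp add: mult.assoc)
qed

lemma beta_hasd: "(betaf N w has_real_derivative dbetaf N w t) (at t)"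
proof -
  have "((\<lambda>t. \<Sum>j=1..N. w j * Tf N j t) has_real_derivative (\<Sum>j=1..N. w j * dTf N j t)) (at t)"
    by (intro DERIV_sum DERIV_cmult T_hasd)
  then show ?thesis unfolding betaf_def[abs_def] dbetaf_def .
qed

lemma smooth_T: "smooth_fun (Tf N j)"
proof -
  have "smooth_fun (\<lambda>t. 4 * real N * (t - 1/4) - (2 * real j - 1))"
    by (intro smooth_diff smooth_mult smooth_const smooth_id)
  then have "smooth_fun (\<lambda>t. psi (4 * real N * (t - 1/4) - (2 * real j - 1)))"
    by (rule smooth_compose[OF smooth_psi])
  then have "smooth_fun (\<lambda>t. (1 + psi (4 * real N * (t - 1/4) - (2 * real j - 1))) * (1/2))"
    by (intro smooth_mult smooth_add smooth_const)
  then show ?thesis unfolding Tf_def[abs_def] argf_def by simp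
qed

lemma smooth_beta: "smooth_fun (betaf N w)"
  unfolding betaf_def[abs_def]
  by (rule smooth_sum) (auto intro: smooth_mult smooth_const smooth_T)

lemma T_lo: "argf N j t \<le> -1 \<Longrightarrow> Tf N j t = 0"
  by (simp add: Tf_def psi_lo)
lemma T_hi: "argf N j t \<ge> 1 \<Longrightarrow> Tf N j t = 1"
  by (simp add: Tf_def psi_hi)
lemma dT_out: "argf N j t \<le> -1 \<or> argf N j t \<ge> 1 \<Longrightarrow> dTf N j t = 0"
  by (simp add: dTf_def dpsi_out)
lemma dT_pos: "N \<ge> 1 \<Longrightarrow> -1 < argf N j t \<Longrightarrow> argf N j t < 1 \<Longrightarrow> dTf N j t > 0"
  by (simp add: dTf_def dpsi_pos)
lemma dT_nonneg: "dTf N j t \<ge> 0"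
  by (simp add: dTf_def dpsi_nonneg)
lemma T_01: "Tf N j (yf N j) - Tf N j (yf N (j - 1)) = 1" if "N \<ge> 1" "j \<ge> 1"
proof -
  have "argf N j (yf N j) = 1" using that by (simp add: argf_def yf_def field_simps)
  moreover have "argf N j (yf N (j-1)) = -1" using that by (simp add: argf_def yf_def field_simps of_nat_diff)
  ultimately show ?thesis by (simp add: T_lo T_hi)
qed

lemma arg_low: "N \<ge> 1 \<Longrightarrow> j \<ge> 1 \<Longrightarrow> t \<le> 1/4 \<Longrightarrow> argf N j t \<le> -1"
proof -
  assume a: "N \<ge> 1" "j \<ge> 1" "t \<le> 1/4"
  have "4 * real N * (t - 1/4) \<le> 0" using a by (simp add: mult_nonneg_nonpos)
  moreover have "real j \<ge> 1" using a by simp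
  ultimately show ?thesis by (simp add: argf_def)
qed

lemma arg_high: "N \<ge> 1 \<Longrightarrow> j \<le> N \<Longrightarrow> t \<ge> 3/4 \<Longrightarrow> argf N j t \<ge> 1"
proof -
  assume a: "N \<ge> 1" "j \<le> N" "t \<ge> 3/4"
  have "4 * real N * (t - 1/4) \<ge> 4 * real N * (1/2)" using a by (intro mult_left_mono) auto
  moreover have "real j \<le> real N" using a by simp
  ultimately show ?thesis by (simp add: argf_def)
qed

lemma beta_low: "N \<ge> 1 \<Longrightarrow> t \<le> 1/4 \<Longrightarrow> betaf N w t = 0"
  unfolding betaf_def by (rule sum.neutral) (simp add: T_lo arg_low)
lemma dbeta_low: "N \<ge> 1 \<Longrightarrow> t \<le> 1/4 \<Longrightarrow> dbetaf N w t = 0"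
  unfolding dbetaf_def by (rule sum.neutral) (simp add: dT_out arg_low)
lemma beta_high: "N \<ge> 1 \<Longrightarrow> (\<Sum>j=1..N. w j) = 0 \<Longrightarrow> t \<ge> 3/4 \<Longrightarrow> betaf N w t = 0"
  unfolding betaf_def by (simp add: T_hi arg_high)
lemma dbeta_high: "N \<ge> 1 \<Longrightarrow> t \<ge> 3/4 \<Longrightarrow> dbetaf N w t = 0"
  unfolding dbetaf_def by (rule sum.neutral) (simp add: dT_out arg_high)

lemma dbeta_interval:
  assumes N: "N \<ge> 1" and m: "1 \<le> m" "m \<le> N" and t: "yf N (m-1) \<le> t" "t \<le> yf N m"
  shows "dbetaf N w t = w m * dTf N m t"
proof -
  have u: "2 * real (m-1) \<le> 4 * real N * (t - 1/4)" "4 * real N * (t - 1/4) \<le> 2 * real m"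
  proof -
    have "real N > 0" using N by simp
    have "t - 1/4 \<ge> real (m-1) / (2 * real N)" using t by (simp add: yf_def)
    then have "4 * real N * (t - 1/4) \<ge> 4 * real N * (real (m-1) / (2 * real N))"
      using \<open>real N > 0\<close> by (intro mult_left_mono) auto
    then show "2 * real (m-1) \<le> 4 * real N * (t - 1/4)" using \<open>real N > 0\<close> by simp
    have "t - 1/4 \<le> real m / (2 * real N)" using t by (simp add: yf_def)
    then have "4 * real N * (t - 1/4) \<le> 4 * real N * (real m / (2 * real N))"
      using \<open>real N > 0\<close> by (intro mult_left_mono) auto
    then show "4 * real N * (t - 1/4) \<le> 2 * real m" using \<open>real N > 0\<close> by simp
  qed
  have z: "w j * dTf N j t = 0" if "j \<in> {1..N} - {m}" for j
  proof -
    have "j < m \<or> j > m" using that by auto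
    then have "argf N j t \<le> -1 \<or> argf N j t \<ge> 1"
    proof
      assume "j < m"
      then have "real j \<le> real (m - 1)" by simp
      then show ?thesis using u unfolding argf_def by simp
    next
      assume "j > m"
      then have "real j \<ge> real m + 1" by simp
      then show ?thesis using u unfolding argf_def by simp
    qed
    then show ?thesis by (simp add: dT_out)
  qed
  have "dbetaf N w t = w m * dTf N m t + (\<Sum>j\<in>{1..N} - {m}. w j * dTf N j t)"
    unfolding dbetaf_def using m by (intro sum.remove) auto
  also have "(\<Sum>j\<in>{1..N} - {m}. w j * dTf N j t) = 0"
    using z by (intro sum.neutral) blast
  finally show ?thesis by simp
qed

lemma arg_interval:
  assumes N: "N \<ge> 1" and t: "yf N (m-1) < t" "t < yf N m" and m: "m \<ge> 1"
  shows "-1 < argf N m t" "argf N m t < 1"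
proof -
  have "real N > 0" using N by simp
  have a: "argf N m t = 4 * real N * (t - 1/4) - (2 * real m - 1)" by (simp add: argf_def)
  have "t - 1/4 > real (m-1) / (2 * real N)" using t by (simp add: yf_def)
  then have "4 * real N * (t - 1/4) > 4 * real N * (real (m-1) / (2 * real N))"
    using \<open>real N > 0\<close> by (intro mult_strict_left_mono) auto
  then have "4 * real N * (t - 1/4) > 2 * real (m - 1)" using \<open>real N > 0\<close> by simp
  then show "-1 < argf N m t" using m a by (simp add: of_nat_diff)
  have "t - 1/4 < real m / (2 * real N)" using t by (simp add: yf_def)
  then have "4 * real N * (t - 1/4) < 4 * real N * (real m / (2 * real N))"
    using \<open>real N > 0\<close> by (intro mult_strict_left_mono) auto
  then have "4 * real N * (t - 1/4) < 2 * real m" using \<open>real N > 0\<close> by simp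
  then show "argf N m t < 1" using a by simp
qed

lemma yf_mono: "N \<ge> 1 \<Longrightarrow> i < j \<Longrightarrow> yf N i < yf N j"
  by (simp add: yf_def divide_strict_right_mono)
lemma yf_0: "yf N 0 = 1/4" by (simp add: yf_def)
lemma yf_N: "N \<ge> 1 \<Longrightarrow> yf N N = 3/4" by (simp add: yf_def)
lemma yf_range: "N \<ge> 1 \<Longrightarrow> j \<le> N \<Longrightarrow> 1/4 \<le> yf N j \<and> yf N j \<le> 3/4"
proof -
  assume "N \<ge> 1" "j \<le> N"
  then have "real j / (2 * real N) \<le> real N / (2 * real N)" by (intro divide_right_mono) auto
  also have "real N / (2 * real N) = 1/2" using \<open>N \<ge> 1\<close> by simp
  finally have "real j / (2 * real N) \<le> 1/2" .
  then show ?thesis unfolding yf_def by simp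
qed

lemma isCont_dbeta: "isCont (dbetaf N w) t"
  unfolding dbetaf_def[abs_def] dTf_def argf_def
  by (intro continuous_intros isCont_o2[OF _ isCont_dpsi]) 


lemma est:
  fixes F W q W' :: "real \<Rightarrow> real"
  assumes pr: "p \<le> r"
    and dF: "\<And>t. p \<le> t \<Longrightarrow> t \<le> r \<Longrightarrow> (F has_real_derivative q t * W' t) (at t)"
    and dW: "\<And>t. p \<le> t \<Longrightarrow> t \<le> r \<Longrightarrow> (W has_real_derivative W' t) (at t)"
    and W'0: "\<And>t. p \<le> t \<Longrightarrow> t \<le> r \<Longrightarrow> W' t \<ge> 0"
    and ql: "\<And>t. p \<le> t \<Longrightarrow> t \<le> r \<Longrightarrow> ql \<le> q t"
    and qh: "\<And>t. p \<le> t \<Longrightarrow> t \<le> r \<Longrightarrow> q t \<le> qh"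
  shows "ql * (W r - W p) \<le> F r - F p" "F r - F p \<le> qh * (W r - W p)"
proof -
  have "(\<lambda>t. F t - ql * W t) p \<le> (\<lambda>t. F t - ql * W t) r"
  proof (rule DERIV_nonneg_imp_nondecreasing[OF pr])
    fix t assume t: "p \<le> t" "t \<le> r"
    have "((\<lambda>t. F t - ql * W t) has_real_derivative q t * W' t - ql * W' t) (at t)"
      by (intro DERIV_diff DERIV_cmult dF dW t)
    moreover have "q t * W' t - ql * W' t \<ge> 0"
      using ql[OF t] W'0[OF t] by (simp add: left_diff_distrib[symmetric])
    ultimately show "\<exists>y. ((\<lambda>t. F t - ql * W t) has_real_derivative y) (at t) \<and> 0 \<le> y" by blast
  qed
  then show "ql * (W r - W p) \<le> F r - F p" by (simp add: algebra_simps)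
  have "(\<lambda>t. qh * W t - F t) p \<le> (\<lambda>t. qh * W t - F t) r"
  proof (rule DERIV_nonneg_imp_nondecreasing[OF pr])
    fix t assume t: "p \<le> t" "t \<le> r"
    have "((\<lambda>t. qh * W t - F t) has_real_derivative qh * W' t - q t * W' t) (at t)"
      by (intro DERIV_diff DERIV_cmult dF dW t)
    moreover have "qh * W' t - q t * W' t \<ge> 0"
      using qh[OF t] W'0[OF t] by (simp add: left_diff_distrib[symmetric])
    ultimately show "\<exists>y. ((\<lambda>t. qh * W t - F t) has_real_derivative y) (at t) \<and> 0 \<le> y" by blast
  qed
  then show "F r - F p \<le> qh * (W r - W p)" by (simp add: algebra_simps)
qed

locale constr =
  fixes N :: nat and w :: "nat \<Rightarrow> real" and e :: real
  assumes N1: "N \<ge> 1" and wsum: "(\<Sum>j=1..N. w j) = 0" and e_pos: "0 < e"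
    and e_small: "\<And>t. e * \<bar>dbetaf N w t\<bar> \<le> 1/2"
begin

definition sig where "sig t = t + e * betaf N w t"
definition dsig where "dsig t = 1 + e * dbetaf N w t"
definition phi where "phi t = psi (sig t)"
definition fI where "fI s = phi s * (deriv phi s)^2"
definition G where "G t = integral {-1..t} fI"
definition DD where "DD x = G (- sig x) - G x"
definition Q where "Q y = psi y * (dpsi y)^2"
definition qq where "qq t = Q (sig t) * dsig t"

lemma sig_hasd: "(sig has_real_derivative dsig t) (at t)"
  unfolding sig_def[abs_def] dsig_def
  by (intro DERIV_add DERIV_cmult beta_hasd DERIV_ident)

lemma dsig_bounds: "1/2 \<le> dsig t" "dsig t \<le> 3/2"
proof -
  have "\<bar>e * dbetaf N w t\<bar> \<le> 1/2" using e_small[of t] e_pos by (simp add: abs_mult)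
  then show "1/2 \<le> dsig t" "dsig t \<le> 3/2" unfolding dsig_def by (simp_all add: abs_le_iff)
qed

lemma dsig_pos: "dsig t > 0" using dsig_bounds(1)[of t] by simp

lemma sig_strict:
  assumes "s < t" shows "sig s < sig t"
proof (rule DERIV_pos_imp_increasing[of s t sig])
  show "s < t" by fact
  fix x show "\<exists>y. DERIV sig x :> y \<and> 0 < y" using sig_hasd[of x] dsig_pos[of x] by blast
qed

lemma sig_mono: "s \<le> t \<Longrightarrow> sig s \<le> sig t"
  using sig_strict by (cases "s = t") (auto simp: less_le)

lemma sig_low: "t \<le> 1/4 \<Longrightarrow> sig t = t"
proof -
  assume h: "t \<le> 1/4"
  have "betaf N w t = 0" by (rule beta_low[OF N1 h])
  then show ?thesis by (simp add: sig_def)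
qed
lemma sig_high: "t \<ge> 3/4 \<Longrightarrow> sig t = t"
proof -
  assume h: "t \<ge> 3/4"
  have "betaf N w t = 0" by (rule beta_high[OF N1 wsum h])
  then show ?thesis by (simp add: sig_def)
qed
lemma dsig_low: "t \<le> 1/4 \<Longrightarrow> dsig t = 1"
proof -
  assume h: "t \<le> 1/4"
  have "dbetaf N w t = 0" by (rule dbeta_low[OF N1 h])
  then show ?thesis by (simp add: dsig_def)
qed
lemma dsig_high: "t \<ge> 3/4 \<Longrightarrow> dsig t = 1"
proof -
  assume h: "t \<ge> 3/4"
  have "dbetaf N w t = 0" by (rule dbeta_high[OF N1 h])
  then show ?thesis by (simp add: dsig_def)
qed

lemma sig_mid: "1/4 \<le> t \<Longrightarrow> t \<le> 3/4 \<Longrightarrow> 1/4 \<le> sig t \<and> sig t \<le> 3/4"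
  using sig_mono[of "1/4" t] sig_mono[of t "3/4"] sig_low[of "1/4"] sig_high[of "3/4"] by simp

lemma sig_cases: "sig t = t \<or> (1/4 \<le> t \<and> t \<le> 3/4 \<and> 1/4 \<le> sig t \<and> sig t \<le> 3/4)"
  using sig_low sig_high sig_mid by (cases "t \<le> 1/4"; cases "t \<ge> 3/4") auto

lemma sig_01: "0 < t \<Longrightarrow> t < 1 \<Longrightarrow> 0 < sig t \<and> sig t < 1"
  using sig_cases[of t] by auto
lemma sig_11: "-1 < t \<Longrightarrow> t < 1 \<Longrightarrow> -1 < sig t \<and> sig t < 1"
  using sig_cases[of t] by auto
lemma sig_0: "sig 0 = 0" by (simp add: sig_low)
lemma sig_nonneg: "0 \<le> t \<Longrightarrow> 0 \<le> sig t"
  using sig_cases[of t] by auto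

lemma smooth_sig: "smooth_fun sig"
  unfolding sig_def[abs_def] by (intro smooth_add smooth_mult smooth_id smooth_const smooth_beta)

lemma smooth_phi: "smooth_fun phi"
  unfolding phi_def[abs_def] by (rule smooth_compose[OF smooth_psi smooth_sig])

lemma phi_hasd: "(phi has_real_derivative dpsi (sig t) * dsig t) (at t)"
  unfolding phi_def[abs_def] by (rule DERIV_chain2[OF psi_hasd sig_hasd])

lemma deriv_phi: "deriv phi = (\<lambda>t. dpsi (sig t) * dsig t)"
  by (rule deriv_eqI) (rule phi_hasd)

lemma mono_trans: "monotonic_transition phi"
  unfolding monotonic_transition_def transition_fun_def
proof (intro conjI allI impI ballI)
  show "smooth_fun phi" by (rule smooth_phi)
  fix t :: real
  show "t \<le> -1 \<Longrightarrow> phi t = -1" by (simp add: phi_def sig_low psi_lo)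
  show "t \<ge> 1 \<Longrightarrow> phi t = 1" by (simp add: phi_def sig_high psi_hi)
next
  fix t :: real assume "t \<in> {-1<..<1}"
  then have "-1 < sig t \<and> sig t < 1" using sig_11 by auto
  then show "deriv phi t > 0" unfolding deriv_phi using dsig_pos[of t] dpsi_pos by simp
qed

lemma phi_0: "phi 0 = 0" by (simp add: phi_def sig_0 psi_0)
lemma dphi_0: "deriv phi 0 > 0" by (simp add: deriv_phi sig_0 dsig_low dpsi_pos)

lemma L_eq:
  assumes x: "0 < x" "x < 1"
  shows "L_fun phi x = - sig x"
  unfolding L_fun_def
proof (rule the_equality)
  have s: "0 < sig x" "sig x < 1" using sig_01[OF x] by auto
  have "phi (- sig x) = psi (- sig x)" unfolding phi_def using s by (simp add: sig_low)
  also have "\<dots> = - phi x" by (simp add: psi_odd phi_def)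
  finally show "- sig x \<in> {-1<..<0} \<and> phi (- sig x) = - phi x" using s by simp
next
  fix y assume y: "y \<in> {-1<..<0} \<and> phi y = - phi x"
  have s: "0 < sig x" "sig x < 1" using sig_01[OF x] by auto
  have "sig y = y" using y by (intro sig_low) auto
  then have "psi y = psi (- sig x)" using y unfolding phi_def by (simp add: psi_odd)
  then show "y = - sig x" using psi_inj[of y "- sig x"] y s by auto
qed

lemma isCont_fI: "isCont fI t"
proof -
  have "isCont phi t" by (rule smooth_isCont[OF smooth_phi])
  moreover have "isCont (deriv phi) t" by (rule smooth_isCont[OF smooth_deriv[OF smooth_phi]])
  ultimately show ?thesis unfolding fI_def[abs_def] by (intro continuous_intros)
qed

lemma cont_fI: "continuous_on S fI"
  using isCont_fI continuous_at_imp_continuous_on by blast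

lemma I_eq:
  assumes x: "0 < x" "x < 1"
  shows "I_fun phi x = 4 * DD x"
proof -
  have s: "0 < sig x" "sig x < 1" using sig_01[OF x] by auto
  have "integral {-1..- sig x} fI + integral {- sig x..x} fI = integral {-1..x} fI"
    by (rule Henstock_Kurzweil_Integration.integral_combine) (use s x in auto, intro integrable_continuous_real cont_fI)
  moreover have "\<not> x \<le> - sig x" using s x by simp
  ultimately show ?thesis
    unfolding I_fun_def L_eq[OF x] DD_def G_def fI_def[symmetric] by simp
qed

lemma G_hasd:
  assumes "-1 < y" "y < 1"
  shows "(G has_real_derivative fI y) (at y)"
proof -
  have "(G has_real_derivative fI y) (at y within {-1..1})"
    unfolding G_def[abs_def] by (rule integral_has_real_derivative[OF cont_fI]) (use assms in auto)
  then have "(G has_real_derivative fI y) (at y within {-1<..<1})"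
    by (rule DERIV_subset) auto
  moreover have "at y within {-1<..<1} = at y" by (rule at_within_open) (use assms in auto)
  ultimately show ?thesis by simp
qed

lemma DD_hasd:
  assumes x: "0 \<le> x" "x < 1"
  shows "(DD has_real_derivative - (e * qq x * dbetaf N w x)) (at x)"
proof -
  have s: "0 \<le> sig x" "sig x < 1"
  proof -
    show "0 \<le> sig x" by (rule sig_nonneg[OF x(1)])
    show "sig x < 1"
    proof (cases "x = 0")
      case True then show ?thesis by (simp add: sig_0)
    next
      case False then show ?thesis using sig_01[of x] x by simp
    qed
  qed
  have d1: "((\<lambda>x. - sig x) has_real_derivative - dsig x) (at x)"
    by (intro DERIV_minus sig_hasd)
  have dG1: "(G has_real_derivative fI (- sig x)) (at (- sig x))"
    using s by (intro G_hasd) auto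
  have dG2: "(G has_real_derivative fI x) (at x)"
    using x by (intro G_hasd) auto
  have "(DD has_real_derivative fI (- sig x) * (- dsig x) - fI x) (at x)"
    unfolding DD_def[abs_def] by (intro DERIV_diff DERIV_chain2[OF dG1 d1] dG2)
  moreover have "fI (- sig x) = - Q (sig x)"
  proof -
    have "sig (- sig x) = - sig x" using s by (simp add: sig_low)
    moreover have "dsig (- sig x) = 1" using s by (simp add: dsig_low)
    ultimately show ?thesis
      unfolding fI_def deriv_phi Q_def phi_def by (simp add: psi_odd dpsi_even)
  qed
  moreover have "fI x = Q (sig x) * (dsig x)^2"
    unfolding fI_def deriv_phi Q_def phi_def by (simp add: power_mult_distrib)
  moreover have "- Q (sig x) * (- dsig x) - Q (sig x) * (dsig x)^2 = - (e * qq x * dbetaf N w x)"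
    unfolding qq_def dsig_def by (simp add: power2_eq_square algebra_simps)
  ultimately show ?thesis by simp
qed

end


context constr
begin

lemma DD_0: "DD 0 = 0" by (simp add: DD_def sig_0)

lemma DD_quarter: "DD (1/4) = 0"
proof -
  have d: "\<And>t. 0 \<le> t \<Longrightarrow> t \<le> 1/4 \<Longrightarrow> (DD has_real_derivative 0) (at t)"
  proof -
    fix t :: real assume t: "0 \<le> t" "t \<le> 1/4"
    have "dbetaf N w t = 0" by (rule dbeta_low[OF N1 t(2)])
    then show "(DD has_real_derivative 0) (at t)" using DD_hasd[of t] t by simp
  qed
  have "DD 0 \<le> DD (1/4)"
    by (rule DERIV_nonneg_imp_nondecreasing[of 0 "1/4" DD]) (use d in auto)
  moreover have "DD 0 \<ge> DD (1/4)"
    by (rule DERIV_nonpos_imp_nonincreasing[of 0 "1/4" DD]) (use d in auto)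
  ultimately show ?thesis using DD_0 by simp
qed

lemma qq_bounds:
  assumes Qb: "\<And>y. 1/4 \<le> y \<Longrightarrow> y \<le> 3/4 \<Longrightarrow> ql \<le> Q y \<and> Q y \<le> qh" and ql: "ql > 0"
    and t: "1/4 \<le> t" "t \<le> 3/4"
  shows "ql/2 \<le> qq t" "qq t \<le> 3*qh/2"
proof -
  have q1: "ql \<le> Q (sig t)" "Q (sig t) \<le> qh" using Qb sig_mid[OF t] by auto
  have d: "1/2 \<le> dsig t" "dsig t \<le> 3/2" by (rule dsig_bounds)+
  have "ql * (1/2) \<le> Q (sig t) * dsig t"
    by (rule mult_mono) (use q1 d ql in auto)
  then show "ql/2 \<le> qq t" by (simp add: qq_def)
  have "Q (sig t) * dsig t \<le> qh * (3/2)"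
    by (rule mult_mono) (use q1 d ql in auto)
  then show "qq t \<le> 3*qh/2" by (simp add: qq_def)
qed

lemma step_gen:
  assumes Qb: "\<And>y. 1/4 \<le> y \<Longrightarrow> y \<le> 3/4 \<Longrightarrow> ql \<le> Q y \<and> Q y \<le> qh" and ql: "ql > 0"
    and m: "1 \<le> m" "m \<le> N" and c: "c * w m \<le> 0" "c = 1 \<or> c = -1"
  shows "ql/2 * (e * (- c * w m)) \<le> c * DD (yf N m) - c * DD (yf N (m-1))"
        "c * DD (yf N m) - c * DD (yf N (m-1)) \<le> 3*qh/2 * (e * (- c * w m))"
proof -
  let ?p = "yf N (m-1)" and ?r = "yf N m"
  have pr: "?p \<le> ?r" using yf_mono[OF N1, of "m-1" m] m by simp
  have rng: "1/4 \<le> t \<and> t \<le> 3/4" if "?p \<le> t" "t \<le> ?r" for t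
  proof -
    have "m - 1 \<le> N" using m by simp
    then show ?thesis using yf_range[OF N1, of "m-1"] yf_range[OF N1, of m] m that by linarith
  qed
  define W where "W t = e * (- c * w m) * Tf N m t" for t
  define W' where "W' t = e * (- c * w m) * dTf N m t" for t
  define F where "F t = c * DD t" for t
  have T1: "Tf N m ?r - Tf N m ?p = 1" using T_01[OF N1 m(1)] by simp
  have Wd: "W ?r - W ?p = e * (- c * w m)"
  proof -
    have "W ?r - W ?p = e * (- c * w m) * (Tf N m ?r - Tf N m ?p)" unfolding W_def by (simp add: right_diff_distrib)
    then show ?thesis using T1 by simp
  qed
  have dF: "(F has_real_derivative qq t * W' t) (at t)" if t: "?p \<le> t" "t \<le> ?r" for t
  proof -
    have "dbetaf N w t = w m * dTf N m t" by (rule dbeta_interval[OF N1 m t])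
    moreover have "(DD has_real_derivative - (e * qq t * dbetaf N w t)) (at t)"
      using rng[OF t] by (intro DD_hasd) auto
    ultimately have "(DD has_real_derivative - (e * qq t * (w m * dTf N m t))) (at t)" by simp
    then have "((\<lambda>t. c * DD t) has_real_derivative c * - (e * qq t * (w m * dTf N m t))) (at t)"
      by (rule DERIV_cmult)
    then show ?thesis unfolding F_def[abs_def] W'_def by (simp add: algebra_simps)
  qed
  have dW: "(W has_real_derivative W' t) (at t)" for t
    unfolding W_def[abs_def] W'_def by (intro DERIV_cmult T_hasd)
  have W0: "W' t \<ge> 0" for t
  proof -
    have "- c * w m \<ge> 0" using c by simp
    then have "e * (- c * w m) \<ge> 0" by (rule mult_nonneg_nonneg[rotated]) (use e_pos in simp)
    then show ?thesis unfolding W'_def using dT_nonneg by (rule mult_nonneg_nonneg)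
  qed
  have q1: "ql/2 \<le> qq t" if "?p \<le> t" "t \<le> ?r" for t using qq_bounds[OF Qb ql] rng[OF that] by auto
  have q2: "qq t \<le> 3*qh/2" if "?p \<le> t" "t \<le> ?r" for t using qq_bounds[OF Qb ql] rng[OF that] by auto
  have E1: "ql/2 * (W ?r - W ?p) \<le> F ?r - F ?p"
    by (rule est(1)[OF pr, of F qq W' W "ql/2" "3*qh/2"]) (use dF dW W0 q1 q2 in auto)
  have E2: "F ?r - F ?p \<le> 3*qh/2 * (W ?r - W ?p)"
    by (rule est(2)[OF pr, of F qq W' W "ql/2" "3*qh/2"]) (use dF dW W0 q1 q2 in auto)
  show "ql/2 * (e * (- c * w m)) \<le> c * DD (yf N m) - c * DD (yf N (m-1))"
    using E1 unfolding Wd F_def .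
  show "c * DD (yf N m) - c * DD (yf N (m-1)) \<le> 3*qh/2 * (e * (- c * w m))"
    using E2 unfolding Wd F_def .
qed

end


definition sg :: "nat \<Rightarrow> real" where "sg m = (if even m then 1 else -1)"

lemma sg_Suc: "sg (Suc m) = - sg m" by (simp add: sg_def)
lemma sg_sq: "sg m * sg m = 1" by (simp add: sg_def)

context constr
begin

lemma signs:
  assumes Qb: "\<And>y. 1/4 \<le> y \<Longrightarrow> y \<le> 3/4 \<Longrightarrow> ql \<le> Q y \<and> Q y \<le> qh" and ql: "ql > 0"
    and r: "r > 0" "ql/2 * r > 3 * qh"
    and wdef: "\<And>j. 1 \<le> j \<Longrightarrow> j < N \<Longrightarrow> w j = - sg j * r ^ j"
  shows "m < N \<Longrightarrow> 0 \<le> sg m * DD (yf N m) \<and> sg m * DD (yf N m) \<le> 3 * qh * e * r ^ m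
            \<and> (1 \<le> m \<longrightarrow> 0 < sg m * DD (yf N m))"
proof (induction m)
  case 0
  then show ?case using DD_quarter Qb[of "1/2"] ql e_pos by (simp add: yf_0 sg_def)
next
  case (Suc m)
  then have IH: "0 \<le> sg m * DD (yf N m)" "sg m * DD (yf N m) \<le> 3 * qh * e * r ^ m" by auto
  have m1: "1 \<le> Suc m" "Suc m \<le> N" using Suc.prems by auto
  have ww: "- sg (Suc m) * w (Suc m) = r ^ (Suc m)"
    using wdef[of "Suc m"] Suc.prems by (simp add: sg_sq mult.assoc[symmetric])
  have c: "sg (Suc m) * w (Suc m) \<le> 0" "sg (Suc m) = 1 \<or> sg (Suc m) = -1"
  proof -
    have "sg (Suc m) * w (Suc m) = - (r ^ (Suc m))" using ww by linarith
    then show "sg (Suc m) * w (Suc m) \<le> 0" using r by simp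
    show "sg (Suc m) = 1 \<or> sg (Suc m) = -1" by (simp add: sg_def)
  qed
  have st1: "ql/2 * (e * r ^ (Suc m)) \<le> sg (Suc m) * DD (yf N (Suc m)) - sg (Suc m) * DD (yf N m)"
    using step_gen(1)[OF Qb ql m1 c] unfolding ww by simp
  have st2: "sg (Suc m) * DD (yf N (Suc m)) - sg (Suc m) * DD (yf N m) \<le> 3*qh/2 * (e * r ^ (Suc m))"
    using step_gen(2)[OF Qb ql m1 c] unfolding ww by simp
  have A: "sg (Suc m) * DD (yf N m) = - (sg m * DD (yf N m))" by (simp add: sg_Suc)
  have key: "ql/2 * (e * r ^ (Suc m)) - 3 * qh * e * r ^ m > 0"
  proof -
    have "ql/2 * (e * r ^ (Suc m)) - 3 * qh * e * r ^ m = (e * r ^ m) * (ql/2 * r - 3 * qh)"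
      by (simp add: algebra_simps)
    moreover have "(e * r ^ m) * (ql/2 * r - 3 * qh) > 0"
      using e_pos r by (intro mult_pos_pos) auto
    ultimately show ?thesis by simp
  qed
  have qh0: "qh > 0" using Qb[of "1/2"] ql by simp
  have up: "3*qh/2 * (e * r ^ (Suc m)) \<le> 3 * qh * e * r ^ (Suc m)"
    using qh0 e_pos r by (simp add: mult_pos_pos)
  show ?case using st1 st2 A key up IH by auto
qed

lemma zero_exists:
  assumes Qb: "\<And>y. 1/4 \<le> y \<Longrightarrow> y \<le> 3/4 \<Longrightarrow> ql \<le> Q y \<and> Q y \<le> qh" and ql: "ql > 0"
    and r: "r > 0" "ql/2 * r > 3 * qh"
    and wdef: "\<And>j. 1 \<le> j \<Longrightarrow> j < N \<Longrightarrow> w j = - sg j * r ^ j"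
    and m: "1 \<le> m" "m + 1 < N"
  shows "\<exists>z. yf N m < z \<and> z < yf N (m+1) \<and> simple_zero (I_fun phi) z"
proof -
  let ?a = "yf N m" and ?b = "yf N (m+1)"
  have s1: "0 < sg m * DD ?a" using signs[OF Qb ql r wdef, of m] m by auto
  have s2: "0 < sg (Suc m) * DD ?b" using signs[OF Qb ql r wdef, of "Suc m"] m by auto
  have ab: "?a < ?b" by (rule yf_mono[OF N1]) simp
  have rng: "1/4 \<le> t \<and> t \<le> 3/4" if "?a \<le> t" "t \<le> ?b" for t
    using yf_range[OF N1, of m] yf_range[OF N1, of "m+1"] m that by auto
  have cont: "continuous_on {?a..?b} DD"
  proof (rule continuous_at_imp_continuous_on, rule ballI)
    fix t assume "t \<in> {?a..?b}"
    then have "?a \<le> t" "t \<le> ?b" by auto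
    then have "1/4 \<le> t \<and> t \<le> 3/4" by (rule rng)
    then have "0 \<le> t" "t < 1" by linarith+
    then show "isCont DD t" using DD_hasd DERIV_isCont by blast
  qed
  obtain z where z: "?a \<le> z" "z \<le> ?b" "DD z = 0"
  proof (cases "even m")
    case True
    then have "DD ?a > 0" "DD ?b < 0" using s1 s2 by (simp_all add: sg_def)
    then show ?thesis using IVT2'[of DD ?b 0 ?a, OF _ _ _ cont] ab that by force
  next
    case False
    then have "DD ?a < 0" "DD ?b > 0" using s1 s2 by (simp_all add: sg_def)
    then show ?thesis using IVT'[of DD ?a 0 ?b, OF _ _ _ cont] ab that by force
  qed
  have za: "z \<noteq> ?a" using z s1 by auto
  have zb: "z \<noteq> ?b" using z s2 by auto
  have z1: "?a < z" "z < ?b" using z za zb by auto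
  have z01: "0 < z" "z < 1" using rng[of z] z by auto
  have dI: "(I_fun phi has_real_derivative 4 * - (e * qq z * dbetaf N w z)) (at z)"
  proof (rule has_field_derivative_transform_within_open[of "\<lambda>x. 4 * DD x" _ z "{0<..<1}"])
    show "((\<lambda>x. 4 * DD x) has_real_derivative 4 * - (e * qq z * dbetaf N w z)) (at z)"
      using DD_hasd[of z] z01 by (intro DERIV_cmult) auto
    show "open {0<..<(1::real)}" by simp
    show "z \<in> {0<..<1}" using z01 by simp
    fix x :: real assume "x \<in> {0<..<1}"
    then show "4 * DD x = I_fun phi x" using I_eq by simp
  qed
  have nz: "4 * - (e * qq z * dbetaf N w z) \<noteq> 0"
  proof -
    have m2: "1 \<le> m + 1" "m + 1 \<le> N" using m by auto
    have db: "dbetaf N w z = w (m+1) * dTf N (m+1) z"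
      by (rule dbeta_interval[OF N1 m2]) (use z in auto)
    have "-1 < argf N (m+1) z" "argf N (m+1) z < 1"
      using arg_interval[OF N1, of "m+1" z] z1 by auto
    then have "dTf N (m+1) z > 0" using dT_pos N1 by blast
    moreover have "w (m+1) \<noteq> 0" using wdef[of "m+1"] m r by (simp add: sg_def)
    moreover have "qq z > 0"
    proof -
      have sz: "1/4 \<le> sig z" "sig z \<le> 3/4" using sig_mid rng[of z] z by auto
      then have "psi (sig z) > 0" by (intro psi_pos) auto
      moreover have "dpsi (sig z) > 0" using sz by (intro dpsi_pos) auto
      ultimately show ?thesis unfolding qq_def Q_def using dsig_pos[of z] by simp
    qed
    ultimately show ?thesis using db e_pos by simp
  qed
  have "simple_zero (I_fun phi) z"
    unfolding simple_zero_def using I_eq[OF z01] z(3) dI nz by auto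
  then show ?thesis using z1 by blast
qed

end


theorem mainTheorem5:
  fixes k :: nat
  assumes "k > 0"
  shows "\<exists>\<phi>. monotonic_transition \<phi> \<and> \<phi> 0 = 0 \<and> deriv \<phi> 0 > 0 \<and>
           (\<exists>S. finite S \<and> card S \<ge> k \<and> S \<subseteq> {0<..<1} \<and>
                (\<forall>x\<in>S. simple_zero (I_fun \<phi>) x))"
proof -
  define Q0 where "Q0 y = psi y * (dpsi y)^2" for y
  have Q0c: "continuous_on {1/4..3/4} Q0"
    unfolding Q0_def[abs_def]
    by (intro continuous_at_imp_continuous_on ballI continuous_intros isCont_psi isCont_dpsi)
  obtain y1 where y1: "y1 \<in> {1/4..3/4}" "\<And>y. y \<in> {1/4..3/4} \<Longrightarrow> Q0 y1 \<le> Q0 y"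
    using continuous_attains_inf[OF compact_Icc _ Q0c] by auto
  obtain y2 where y2: "y2 \<in> {1/4..3/4}" "\<And>y. y \<in> {1/4..3/4} \<Longrightarrow> Q0 y \<le> Q0 y2"
    using continuous_attains_sup[OF compact_Icc _ Q0c] by auto
  define ql where "ql = Q0 y1"
  define qh where "qh = Q0 y2"
  have ql: "ql > 0"
  proof -
    have "psi y1 > 0" using y1(1) by (intro psi_pos) auto
    moreover have "dpsi y1 > 0" using y1(1) by (intro dpsi_pos) auto
    ultimately show ?thesis by (simp add: ql_def Q0_def)
  qed
  have Qb0: "ql \<le> Q0 y \<and> Q0 y \<le> qh" if "1/4 \<le> y" "y \<le> 3/4" for y
    using y1(2)[of y] y2(2)[of y] that by (simp add: ql_def qh_def)
  have qh: "qh > 0" using Qb0[of "1/2"] ql by simp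
  define r where "r = 6 * qh / ql + 1"
  have r: "r > 0" "ql/2 * r > 3 * qh"
  proof -
    have "6 * qh / ql > 0" using qh ql by simp
    then show "r > 0" by (simp add: r_def)
    have "ql/2 * r = 3 * qh + ql/2" using ql by (simp add: r_def field_simps)
    then show "ql/2 * r > 3 * qh" using ql by simp
  qed
  define N where "N = k + 2"
  have N1: "N \<ge> 1" by (simp add: N_def)
  define w where "w j = (if j < N then - sg j * r ^ j else - (\<Sum>i=1..N-1. - sg i * r ^ i))" for j
  have wdef: "\<And>j. 1 \<le> j \<Longrightarrow> j < N \<Longrightarrow> w j = - sg j * r ^ j" by (simp add: w_def)
  have wsum: "(\<Sum>j=1..N. w j) = 0"
  proof -
    have NS: "N = Suc (k+1)" by (simp add: N_def)
    have "(\<Sum>j=1..N. w j) = (\<Sum>j=1..k+1. w j) + w N"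
      unfolding NS by (simp add: sum.cl_ivl_Suc)
    also have "(\<Sum>j=1..k+1. w j) = (\<Sum>i=1..N-1. - sg i * r ^ i)"
      by (rule sum.cong) (auto simp: w_def N_def)
    finally show ?thesis by (simp add: w_def)
  qed
  have dbc: "continuous_on {1/4..3/4} (\<lambda>t. \<bar>dbetaf N w t\<bar>)"
    by (intro continuous_at_imp_continuous_on ballI continuous_intros isCont_dbeta)
  obtain y3 where y3: "y3 \<in> {1/4..3/4}" "\<And>y. y \<in> {1/4..3/4} \<Longrightarrow> \<bar>dbetaf N w y\<bar> \<le> \<bar>dbetaf N w y3\<bar>"
    using continuous_attains_sup[OF compact_Icc _ dbc] by auto
  define M where "M = \<bar>dbetaf N w y3\<bar>"
  have Mb: "\<bar>dbetaf N w t\<bar> \<le> M" for t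
  proof (cases "t \<le> 1/4 \<or> t \<ge> 3/4")
    case True
    then have "dbetaf N w t = 0" using dbeta_low[OF N1] dbeta_high[OF N1] by blast
    then show ?thesis by (simp add: M_def)
  next
    case False then show ?thesis using y3(2)[of t] by (simp add: M_def)
  qed
  have M0: "M \<ge> 0" by (simp add: M_def)
  define e where "e = 1 / (2 * (M + 1))"
  have e_pos: "e > 0" using M0 by (simp add: e_def)
  have e_small: "e * \<bar>dbetaf N w t\<bar> \<le> 1/2" for t
  proof -
    have "e * \<bar>dbetaf N w t\<bar> \<le> e * M" using Mb[of t] e_pos by (simp add: mult_left_mono)
    also have "e * M \<le> 1/2" using M0 by (simp add: e_def field_simps)
    finally show ?thesis .
  qed
  interpret c: constr N w e
    by unfold_locales (use N1 wsum e_pos e_small in auto)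
  have Qb: "ql \<le> c.Q y \<and> c.Q y \<le> qh" if "1/4 \<le> y" "y \<le> 3/4" for y
    using Qb0[OF that] by (simp add: c.Q_def Q0_def)
  have ex: "\<exists>z. yf N m < z \<and> z < yf N (m+1) \<and> simple_zero (I_fun c.phi) z" if "m \<in> {1..k}" for m
    using c.zero_exists[OF Qb ql r wdef, of m] that by (auto simp: N_def)
  define Z where "Z m = (SOME z. yf N m < z \<and> z < yf N (m+1) \<and> simple_zero (I_fun c.phi) z)" for m
  have Z: "yf N m < Z m \<and> Z m < yf N (m+1) \<and> simple_zero (I_fun c.phi) (Z m)" if "m \<in> {1..k}" for m
    unfolding Z_def using someI_ex[OF ex[OF that]] .
  have Zmono: "Z m < Z m'" if "m \<in> {1..k}" "m' \<in> {1..k}" "m < m'" for m m'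
  proof -
    have "yf N (m+1) \<le> yf N m'"
      using yf_mono[OF N1, of "m+1" m'] that by (cases "m + 1 = m'") auto
    then show ?thesis using Z[OF that(1)] Z[OF that(2)] by linarith
  qed
  have inj: "inj_on Z {1..k}"
  proof (rule inj_onI)
    fix m m' assume "m \<in> {1..k}" "m' \<in> {1..k}" "Z m = Z m'"
    then show "m = m'" using Zmono[of m m'] Zmono[of m' m] by (cases m m' rule: linorder_cases) auto
  qed
  have sub: "Z ` {1..k} \<subseteq> {0<..<1}"
  proof
    fix x assume "x \<in> Z ` {1..k}"
    then obtain m where m: "m \<in> {1..k}" "x = Z m" by auto
    have "1/4 \<le> yf N m" "yf N (m+1) \<le> 3/4" using yf_range[OF N1, of m] yf_range[OF N1, of "m+1"] m
      by (auto simp: N_def)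
    then show "x \<in> {0<..<1}" using Z[OF m(1)] m(2) by auto
  qed
  show ?thesis
  proof (intro exI conjI)
    show "monotonic_transition c.phi" by (rule c.mono_trans)
    show "c.phi 0 = 0" by (rule c.phi_0)
    show "deriv c.phi 0 > 0" by (rule c.dphi_0)
    show "finite (Z ` {1..k})" by simp
    show "card (Z ` {1..k}) \<ge> k" using card_image[OF inj] by simp
    show "Z ` {1..k} \<subseteq> {0<..<1}" by (rule sub)
    show "\<forall>x\<in>Z ` {1..k}. simple_zero (I_fun c.phi) x" using Z by auto
  qed
qed


end
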